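(* Let $\tfrac12<\alpha<1$, $0<\beta\le\alpha-\tfrac12$, and let $K$ be a non-negative symmetric integrable function on $\mathbb{R}$ with $K(x)=O\big((1+|x|^{1-\beta})^{-1}\big)$. Let $I_1(x,y,w)=K(w)K(x+y-w)$ and $I_2(x,y,w)=K(w-x)K(w-y)$. Then $\Delta_0:=\int_0^\infty x^{-\alpha}K(x)\,dx<\infty$, $A_\alpha:=\int_0^\infty\int_0^\infty\int_0^\infty x^{-\alpha}y^{-\alpha}[I_1(x,y,w)+I_2(x,y,w)]\,dx\,dy\,dw<\infty$, and, as $h\to0$, $\Delta_1:=\int_0^{1/h}\int_0^{1/h}\int_x^{1/h}x^{-\alpha}y^{-\alpha}\max\{w,y\}[I_1(x,y,w)+I_2(x,y,w)]\,dx\,dy\,dw=o(1/h)$.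
   Context: In $\Delta_1$ the innermost integral is over $w\in[x,1/h]$, the outer ones over $x,y\in[0,1/h]$. *)

theory Defs
  imports "HOL-Analysis.Analysis"
begin

definition I1 :: "(real \<Rightarrow> real) \<Rightarrow> real \<Rightarrow> real \<Rightarrow> real \<Rightarrow> real" where
  "I1 K x y w = K w * K (x + y - w)"

definition I2 :: "(real \<Rightarrow> real) \<Rightarrow> real \<Rightarrow> real \<Rightarrow> real \<Rightarrow> real" where
  "I2 K x y w = K (w - x) * K (w - y)"

definition Delta0 :: "real \<Rightarrow> (real \<Rightarrow> real) \<Rightarrow> ennreal" where
  "Delta0 \<alpha> K = (\<integral>\<^sup>+ x \<in> {0<..}. ennreal (x powr (-\<alpha>) * K x) \<partial>lborel)"

definition A_alpha :: "real \<Rightarrow> (real \<Rightarrow> real) \<Rightarrow> ennreal" where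
  "A_alpha \<alpha> K = (\<integral>\<^sup>+ w \<in> {0<..}. \<integral>\<^sup>+ y \<in> {0<..}. \<integral>\<^sup>+ x \<in> {0<..}.
      ennreal (x powr (-\<alpha>) * y powr (-\<alpha>) * (I1 K x y w + I2 K x y w)) \<partial>lborel \<partial>lborel \<partial>lborel)"

definition Delta1 :: "real \<Rightarrow> (real \<Rightarrow> real) \<Rightarrow> real \<Rightarrow> ennreal" where
  "Delta1 \<alpha> K h = (\<integral>\<^sup>+ x \<in> {0..1/h}. \<integral>\<^sup>+ y \<in> {0..1/h}. \<integral>\<^sup>+ w \<in> {x..1/h}.
      ennreal (x powr (-\<alpha>) * y powr (-\<alpha>) * max w y * (I1 K x y w + I2 K x y w))
        \<partial>lborel \<partial>lborel \<partial>lborel)"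

end

theory Submission
  imports Defs
begin


lemma nest3:
  fixes f :: "real \<times> real \<times> real \<Rightarrow> ennreal"
  assumes [measurable]: "f \<in> borel_measurable borel"
  shows "(\<integral>\<^sup>+x. \<integral>\<^sup>+y. \<integral>\<^sup>+w. f (x,y,w) \<partial>lborel \<partial>lborel \<partial>lborel) = (\<integral>\<^sup>+p. f p \<partial>lborel)"
proof -
  have "(\<integral>\<^sup>+y. \<integral>\<^sup>+w. f (x,y,w) \<partial>lborel \<partial>lborel) = (\<integral>\<^sup>+q. f (x,q) \<partial>lborel)" for x
    using lborel.nn_integral_fst[where f="\<lambda>q. f (x,q)"] by (simp add: lborel_prod)
  hence "(\<integral>\<^sup>+x. \<integral>\<^sup>+y. \<integral>\<^sup>+w. f (x,y,w) \<partial>lborel \<partial>lborel \<partial>lborel) = (\<integral>\<^sup>+x. \<integral>\<^sup>+q. f (x,q) \<partial>lborel \<partial>lborel)"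
    by simp
  also have "\<dots> = (\<integral>\<^sup>+p. f p \<partial>lborel)"
    using lborel.nn_integral_fst[where f=f] by (simp add: lborel_prod)
  finally show ?thesis .
qed

lemma swap3:
  fixes f :: "real \<times> real \<times> real \<Rightarrow> ennreal"
  assumes [measurable]: "f \<in> borel_measurable borel"
  shows "(\<integral>\<^sup>+w. \<integral>\<^sup>+y. \<integral>\<^sup>+x. f (x,y,w) \<partial>lborel \<partial>lborel \<partial>lborel) =
         (\<integral>\<^sup>+x. \<integral>\<^sup>+y. \<integral>\<^sup>+w. f (x,y,w) \<partial>lborel \<partial>lborel \<partial>lborel)"
proof -
  have "(\<integral>\<^sup>+w. \<integral>\<^sup>+y. \<integral>\<^sup>+x. f (x,y,w) \<partial>lborel \<partial>lborel \<partial>lborel) =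
        (\<integral>\<^sup>+y. \<integral>\<^sup>+w. \<integral>\<^sup>+x. f (x,y,w) \<partial>lborel \<partial>lborel \<partial>lborel)"
    by (rule lborel_pair.Fubini') measurable
  also have "\<dots> = (\<integral>\<^sup>+y. \<integral>\<^sup>+x. \<integral>\<^sup>+w. f (x,y,w) \<partial>lborel \<partial>lborel \<partial>lborel)"
    by (intro nn_integral_cong lborel_pair.Fubini') measurable
  also have "\<dots> = (\<integral>\<^sup>+x. \<integral>\<^sup>+y. \<integral>\<^sup>+w. f (x,y,w) \<partial>lborel \<partial>lborel \<partial>lborel)"
    by (rule lborel_pair.Fubini') measurable
  finally show ?thesis .
qed

lemma powr_int_0:
  assumes "a < 1" "c > 0"
  shows "(\<integral>\<^sup>+x. ennreal (indicator {0..c} x * x powr (-a)) \<partial>lborel) = ennreal (c powr (1-a) / (1-a))"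
proof -
  have "((\<lambda>x. x powr (-a)) has_integral (c powr (-a+1) / (-a+1))) {0..c}"
    by (rule has_integral_powr_from_0) (use assms in auto)
  from nn_integral_has_integral_lebesgue[OF _ this] show ?thesis by (simp add: add.commute)
qed

lemma powr_int_inf:
  assumes "e < -1" "c > 0"
  shows "(\<integral>\<^sup>+x. ennreal (indicator {c..} x * x powr e) \<partial>lborel) = ennreal (-(c powr (e+1)) / (e+1))"
proof -
  have "((\<lambda>x. x powr e) has_integral (-(c powr (e+1)) / (e+1))) {c..}"
    by (rule has_integral_powr_to_inf) (use assms in auto)
  from nn_integral_has_integral_lebesgue[OF _ this] show ?thesis by simp
qed

lemma fin_split:
  fixes f :: "real \<Rightarrow> ennreal" and A B :: ennreal
  assumes "c > 0" "a < 1" "e < -1" "A < \<infinity>" "B < \<infinity>"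
    and "\<And>x. 0 < x \<Longrightarrow> x \<le> c \<Longrightarrow> f x \<le> A * ennreal (x powr (-a))"
    and "\<And>x. c \<le> x \<Longrightarrow> f x \<le> B * ennreal (x powr e)"
  shows "(\<integral>\<^sup>+x. f x * indicator {0<..} x \<partial>lborel) < \<infinity>"
proof -
  have "(\<integral>\<^sup>+x. f x * indicator {0<..} x \<partial>lborel) \<le>
     (\<integral>\<^sup>+x. A * ennreal (indicator {0..c} x * x powr (-a)) + B * ennreal (indicator {c..} x * x powr e) \<partial>lborel)"
  proof (intro nn_integral_mono)
    fix x :: real
    show "f x * indicator {0<..} x \<le> A * ennreal (indicator {0..c} x * x powr (-a)) + B * ennreal (indicator {c..} x * x powr e)"
    proof (cases "0 < x")
      case True
      show ?thesis
      proof (cases "x \<le> c")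
        case True
        then show ?thesis using assms(6)[of x] \<open>0<x\<close> by (auto intro: add_increasing2)
      next
        case False
        then show ?thesis using assms(7)[of x] \<open>0<x\<close> by (auto intro: add_increasing)
      qed
    qed simp
  qed
  also have "\<dots> = A * (\<integral>\<^sup>+x. ennreal (indicator {0..c} x * x powr (-a)) \<partial>lborel) +
                  B * (\<integral>\<^sup>+x. ennreal (indicator {c..} x * x powr e) \<partial>lborel)"
    by (subst nn_integral_add) (auto simp: nn_integral_cmult)
  also have "\<dots> < \<infinity>"
    using assms by (simp add: powr_int_0 powr_int_inf ennreal_mult_less_top)
  finally show ?thesis .
qed



locale L =
  fixes \<alpha> \<beta> :: real and K :: "real \<Rightarrow> real" and C :: real
  assumes a1: "1/2 < \<alpha>" and a2: "\<alpha> < 1" and b1: "0 < \<beta>" and b2: "\<beta> \<le> \<alpha> - 1/2"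
    and Kpos: "\<And>x. K x \<ge> 0"
    and Ksym: "\<And>x. K (-x) = K x"
    and Kint: "integrable lborel K"
    and Cb: "\<And>x. \<bar>K x\<bar> \<le> C * inverse (1 + \<bar>x\<bar> powr (1 - \<beta>))"
begin

lemma Kmeas[measurable]: "K \<in> borel_measurable borel"
  using borel_measurable_integrable[OF Kint] by simp

lemma C0: "0 \<le> C"
  using Cb[of 0] Kpos[of 0] by simp

lemma Kle: "K x \<le> C"
proof -
  have "inverse (1 + \<bar>x\<bar> powr (1 - \<beta>)) \<le> 1" by (simp add: inverse_le_1_iff)
  hence "C * inverse (1 + \<bar>x\<bar> powr (1 - \<beta>)) \<le> C" using C0 by (simp add: mult_left_le)
  thus ?thesis using Cb[of x] by simp
qed

lemma Kdec: assumes "0 \<le> t" "t \<le> \<bar>x\<bar>" shows "K x \<le> C * inverse (1 + t powr (1 - \<beta>))"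
proof -
  have "t powr (1 - \<beta>) \<le> \<bar>x\<bar> powr (1 - \<beta>)" using assms b2 a2 by (intro powr_mono2) auto
  hence "inverse (1 + \<bar>x\<bar> powr (1 - \<beta>)) \<le> inverse (1 + t powr (1 - \<beta>))"
    by (intro le_imp_inverse_le) (auto intro: add_pos_nonneg)
  hence "C * inverse (1 + \<bar>x\<bar> powr (1 - \<beta>)) \<le> C * inverse (1 + t powr (1 - \<beta>))"
    using C0 by (intro mult_left_mono)
  thus ?thesis using Cb[of x] by simp
qed

lemma qle: assumes "0 < t" shows "inverse (1 + t powr (1 - \<beta>)) \<le> t powr (\<beta> - 1)"
proof -
  have "inverse (1 + t powr (1 - \<beta>)) \<le> inverse (t powr (1 - \<beta>))"
    using assms by (intro le_imp_inverse_le) auto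
  moreover have "t powr (\<beta>-1) = inverse (t powr (1-\<beta>))" using powr_minus[of t "1-\<beta>"] by simp
  ultimately show ?thesis by simp
qed

definition "M = (\<integral>\<^sup>+x. ennreal (K x) \<partial>lborel)"

lemma Mfin: "M < \<infinity>"
  unfolding M_def using nn_integral_eq_integral[OF Kint] Kpos by simp

lemma Mshift: "(\<integral>\<^sup>+x. ennreal (K (a - x)) \<partial>lborel) = M"
  unfolding M_def using nn_integral_real_affine[of "\<lambda>x. ennreal (K x)" "-1" a] by simp

definition "g w = (\<integral>\<^sup>+x. ennreal (indicator {0<..} x * x powr (-\<alpha>) * K (w - x)) \<partial>lborel)"

lemma gB: "g w \<le> ennreal (C / (1-\<alpha>)) + M"
proof -
  have "g w \<le> (\<integral>\<^sup>+x. ennreal C * ennreal (indicator {0..1} x * x powr (-\<alpha>)) + ennreal (K (w - x)) \<partial>lborel)"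
    unfolding g_def
  proof (intro nn_integral_mono)
    fix x :: real
    show "ennreal (indicator {0<..} x * x powr (-\<alpha>) * K (w - x))
          \<le> ennreal C * ennreal (indicator {0..1} x * x powr (-\<alpha>)) + ennreal (K (w - x))"
    proof (cases "x > 1")
      case True
      have "x powr (-\<alpha>) \<le> x powr 0" using True a1 by (intro powr_mono) auto
      hence "x powr (-\<alpha>) \<le> 1" using True by simp
      hence "x powr (-\<alpha>) * K (w - x) \<le> K (w - x)" using Kpos[of "w-x"] by (simp add: mult_left_le_one_le)
      thus ?thesis using True by (auto intro!: add_increasing ennreal_leI)
    next
      case False
      show ?thesis
      proof (cases "x > 0")
        case True
        have "x powr (-\<alpha>) * K (w - x) \<le> x powr (-\<alpha>) * C" using Kle by (intro mult_left_mono) auto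
        hence "ennreal (x powr (-\<alpha>) * K (w - x)) \<le> ennreal C * ennreal (x powr (-\<alpha>))"
          using C0 by (simp add: ennreal_mult'[symmetric] mult.commute ennreal_leI)
        thus ?thesis using True False by (auto intro!: add_increasing2)
      qed simp
    qed
  qed
  also have "\<dots> = ennreal C * ennreal (1 / (1-\<alpha>)) + M"
    using powr_int_0[of \<alpha> 1] a2 by (subst nn_integral_add) (auto simp: nn_integral_cmult Mshift)
  also have "\<dots> = ennreal (C / (1-\<alpha>)) + M"
    using C0 a2 by (simp add: ennreal_mult'[symmetric])
  finally show ?thesis .
qed

lemma gD:
  assumes w: "2 powr (1/\<beta>) \<le> w"
  shows "g w \<le> (ennreal (C * 2 powr (1-\<beta>) / (1-\<alpha>)) + M) * ennreal (w powr (-\<alpha>*(1-\<beta>)))"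
proof -
  define \<delta> where "\<delta> = w powr (1-\<beta>)"
  have "0 < 2 powr (1/\<beta>)" by simp
  hence w0: "w > 0" using w by linarith
  have d0: "\<delta> > 0" unfolding \<delta>_def using w0 by simp
  have "(2 powr (1/\<beta>)) powr \<beta> = 2 powr (1/\<beta> * \<beta>)" by (rule powr_powr)
  also have "1/\<beta> * \<beta> = 1" using b1 by simp
  finally have "2 = (2 powr (1/\<beta>)) powr \<beta>" by simp
  also have "\<dots> \<le> w powr \<beta>" using w b1 by (intro powr_mono2) auto
  finally have wb: "2 \<le> w powr \<beta>" .
  have "\<delta> * w powr \<beta> = w powr (1 - \<beta> + \<beta>)" unfolding \<delta>_def by (rule powr_add[symmetric])
  hence "w = \<delta> * w powr \<beta>" using w0 by simp
  moreover have "\<delta> * 2 \<le> \<delta> * w powr \<beta>" using wb d0 by simp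
  ultimately have dw: "\<delta> \<le> w / 2" by linarith
  have "g w \<le> (\<integral>\<^sup>+x. ennreal (C * (w/2) powr (\<beta>-1)) * ennreal (indicator {0..\<delta>} x * x powr (-\<alpha>))
              + ennreal (\<delta> powr (-\<alpha>)) * ennreal (K (w - x)) \<partial>lborel)"
    unfolding g_def
  proof (intro nn_integral_mono)
    fix x :: real
    show "ennreal (indicator {0<..} x * x powr (-\<alpha>) * K (w - x))
          \<le> ennreal (C * (w/2) powr (\<beta>-1)) * ennreal (indicator {0..\<delta>} x * x powr (-\<alpha>))
              + ennreal (\<delta> powr (-\<alpha>)) * ennreal (K (w - x))"
    proof (cases "x > \<delta>")
      case True
      have "x powr (-\<alpha>) \<le> \<delta> powr (-\<alpha>)" using True a1 d0 by (intro powr_mono2') auto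
      hence "x powr (-\<alpha>) * K (w - x) \<le> \<delta> powr (-\<alpha>) * K (w - x)" using Kpos[of "w-x"] by (simp add: mult_right_mono)
      hence "ennreal (x powr (-\<alpha>) * K (w - x)) \<le> ennreal (\<delta> powr (-\<alpha>)) * ennreal (K (w - x))"
        by (simp add: ennreal_mult'[symmetric] ennreal_leI)
      thus ?thesis using True d0 by (auto intro!: add_increasing)
    next
      case False
      show ?thesis
      proof (cases "x > 0")
        case True
        have "K (w - x) \<le> C * inverse (1 + (w/2) powr (1 - \<beta>))"
          using False dw w0 by (intro Kdec) auto
        also have "\<dots> \<le> C * (w/2) powr (\<beta>-1)" using C0 w0 qle[of "w/2"] by (intro mult_left_mono) auto
        finally have "x powr (-\<alpha>) * K (w - x) \<le> x powr (-\<alpha>) * (C * (w/2) powr (\<beta>-1))"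
          by (intro mult_left_mono) auto
        hence "ennreal (x powr (-\<alpha>) * K (w - x)) \<le> ennreal (C * (w/2) powr (\<beta>-1)) * ennreal (x powr (-\<alpha>))"
          using C0 by (simp add: ennreal_mult'[symmetric] mult.commute ennreal_leI)
        thus ?thesis using True False by (auto intro!: add_increasing2)
      qed simp
    qed
  qed
  also have "\<dots> = ennreal (C * (w/2) powr (\<beta>-1)) * ennreal (\<delta> powr (1-\<alpha>) / (1-\<alpha>)) + ennreal (\<delta> powr (-\<alpha>)) * M"
    using powr_int_0[of \<alpha> \<delta>] a2 d0 by (subst nn_integral_add) (auto simp: nn_integral_cmult Mshift)
  also have "\<dots> = (ennreal (C * 2 powr (1-\<beta>) / (1-\<alpha>)) + M) * ennreal (w powr (-\<alpha>*(1-\<beta>)))"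
  proof -
    have e1: "(w/2) powr (\<beta>-1) * \<delta> powr (1-\<alpha>) = 2 powr (1-\<beta>) * w powr (-\<alpha>*(1-\<beta>))"
    proof -
      have "(w/2) powr (\<beta>-1) = w powr (\<beta>-1) / 2 powr (\<beta>-1)"
        using w0 by (intro powr_divide)
      moreover have "2 powr (1-\<beta>) * 2 powr (\<beta>-1) = 1" by (simp add: powr_add[symmetric])
      hence "1 / 2 powr (\<beta>-1) = 2 powr (1-\<beta>)" by (simp add: field_simps)
      ultimately have "(w/2) powr (\<beta>-1) = w powr (\<beta>-1) * 2 powr (1-\<beta>)" by (metis times_divide_eq_right mult_1_right)
      moreover have "\<delta> powr (1-\<alpha>) = w powr ((1-\<beta>)*(1-\<alpha>))" unfolding \<delta>_def by (simp add: powr_powr)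
      moreover have "w powr (\<beta>-1) * w powr ((1-\<beta>)*(1-\<alpha>)) = w powr (-\<alpha>*(1-\<beta>))"
        by (simp add: powr_add[symmetric] algebra_simps)
      ultimately show ?thesis by (simp add: algebra_simps)
    qed
    have e2: "\<delta> powr (-\<alpha>) = w powr (-\<alpha>*(1-\<beta>))" unfolding \<delta>_def by (simp add: powr_powr mult.commute)
    have r: "C * (w/2) powr (\<beta>-1) * (\<delta> powr (1-\<alpha>) / (1-\<alpha>)) = C * 2 powr (1-\<beta>) / (1-\<alpha>) * w powr (-\<alpha>*(1-\<beta>))"
      using e1 by (simp add: field_simps)
    have "ennreal (C * (w/2) powr (\<beta>-1)) * ennreal (\<delta> powr (1-\<alpha>) / (1-\<alpha>))
        = ennreal (C * 2 powr (1-\<beta>) / (1-\<alpha>)) * ennreal (w powr (-\<alpha>*(1-\<beta>)))"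
    proof -
      have n1: "0 \<le> C * (w/2) powr (\<beta>-1)" using C0 by simp
      have n2: "0 \<le> \<delta> powr (1-\<alpha>)/(1-\<alpha>)" using a2 by simp
      have n3: "0 \<le> C * 2 powr (1-\<beta>)/(1-\<alpha>)" using C0 a2 by simp
      show ?thesis unfolding ennreal_mult[OF n1 n2, symmetric] ennreal_mult[OF n3 powr_ge_zero, symmetric] r ..
    qed
    thus ?thesis unfolding e2 by (simp add: algebra_simps)
  qed
  finally show ?thesis .
qed

end


lemma inv_powr_le: fixes t r :: real assumes "0 < t" "0 \<le> r" shows "inverse (1 + t powr r) \<le> t powr (-r)"
proof -
  have "inverse (1 + t powr r) \<le> inverse (t powr r)"
    by (rule le_imp_inverse_le) (use assms in auto)
  thus ?thesis by (simp add: powr_minus)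
qed

context L
begin


lemma ex1: "2*\<alpha>*(1-\<beta>) > 1"
proof -
  have "2*\<alpha>*(1-\<beta>) \<ge> 2*\<alpha>*(3/2-\<alpha>)" using a1 b2 by (intro mult_left_mono) auto
  moreover have "(2*\<alpha>-1)*(1-\<alpha>) > 0" using a1 a2 by (intro mult_pos_pos) auto
  ultimately show ?thesis by (simp add: algebra_simps)
qed

lemma T2fin: "(\<integral>\<^sup>+w. g w * g w * indicator {0<..} w \<partial>lborel) < \<infinity>"
proof -
  define A where "A = (ennreal (C / (1-\<alpha>)) + M) * (ennreal (C / (1-\<alpha>)) + M)"
  define B where "B = (ennreal (C * 2 powr (1-\<beta>) / (1-\<alpha>)) + M) * (ennreal (C * 2 powr (1-\<beta>) / (1-\<alpha>)) + M)"
  have Mf: "M < \<infinity>" by (rule Mfin)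
  show ?thesis
  proof (rule fin_split[where c="2 powr (1/\<beta>)" and a=0 and e="-2*\<alpha>*(1-\<beta>)" and A=A and B=B])
    show "A < \<infinity>" unfolding A_def using Mf by (simp add: ennreal_mult_less_top)
    show "B < \<infinity>" unfolding B_def using Mf by (simp add: ennreal_mult_less_top)
    show "-2*\<alpha>*(1-\<beta>) < -1" using ex1 by simp
    fix x :: real
    show "0 < x \<Longrightarrow> x \<le> 2 powr (1/\<beta>) \<Longrightarrow> g x * g x \<le> A * ennreal (x powr (-0))"
    proof -
      assume "0 < x"
      have gx: "g x \<le> ennreal (C / (1-\<alpha>)) + M" by (rule gB)
      have "g x * g x \<le> A" unfolding A_def by (rule mult_mono[OF gx gx]) auto
      thus ?thesis using \<open>0 < x\<close> by simp
    qed
    assume x: "2 powr (1/\<beta>) \<le> x"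
    have "0 < 2 powr (1/\<beta>)" by simp
    hence x0: "x > 0" using x by linarith
    define E where "E = ennreal (C * 2 powr (1-\<beta>) / (1-\<alpha>)) + M"
    define W where "W = ennreal (x powr (-\<alpha>*(1-\<beta>)))"
    have gx: "g x \<le> E * W" unfolding E_def W_def by (rule gD[OF x])
    have "g x * g x \<le> (E * W) * (E * W)" by (rule mult_mono[OF gx gx]) auto
    also have "\<dots> = B * (W * W)" unfolding B_def E_def by (simp only: mult_ac)
    finally have "g x * g x \<le> B * (ennreal (x powr (-\<alpha>*(1-\<beta>))) * ennreal (x powr (-\<alpha>*(1-\<beta>))))"
      unfolding W_def .
    also have "ennreal (x powr (-\<alpha>*(1-\<beta>))) * ennreal (x powr (-\<alpha>*(1-\<beta>))) = ennreal (x powr (-2*\<alpha>*(1-\<beta>)))"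
    proof -
      have "x powr (-\<alpha>*(1-\<beta>)) * x powr (-\<alpha>*(1-\<beta>)) = x powr (-\<alpha>*(1-\<beta>) + -\<alpha>*(1-\<beta>))"
        by (rule powr_add[symmetric])
      also have "-\<alpha>*(1-\<beta>) + -\<alpha>*(1-\<beta>) = -2*\<alpha>*(1-\<beta>)" by simp
      finally show ?thesis by (simp add: ennreal_mult[symmetric])
    qed
    finally show "g x * g x \<le> B * ennreal (x powr (-2*\<alpha>*(1-\<beta>)))" .
  qed (simp_all add: b1)
qed

lemma ex2: "\<alpha> + (1-\<beta>)/2 > 1"
proof -
  have "2*\<alpha> + (1-\<beta>) > 2" using a1 b2 by linarith
  hence "(2*\<alpha> + (1-\<beta>))/2 > 1" by simp
  thus ?thesis by (simp add: add_divide_distrib)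
qed

lemma conv:
  assumes s: "0 < s"
  shows "(\<integral>\<^sup>+w. ennreal (indicator {0<..} w * K w * K (s - w)) \<partial>lborel)
         \<le> ennreal (2 * C * inverse (1 + (s/2) powr (1-\<beta>))) * M"
proof -
  define q where "q = C * inverse (1 + (s/2) powr (1-\<beta>))"
  have q0: "0 \<le> q" unfolding q_def using C0 by simp
  have "(\<integral>\<^sup>+w. ennreal (indicator {0<..} w * K w * K (s - w)) \<partial>lborel)
      \<le> (\<integral>\<^sup>+w. ennreal q * ennreal (K (s - w)) + ennreal q * ennreal (K w) \<partial>lborel)"
  proof (intro nn_integral_mono)
    fix w :: real
    have "K w * K (s - w) \<le> q * K (s - w) + q * K w"
    proof (cases "w \<ge> s/2")
      case True
      have "K w \<le> q" unfolding q_def using True s by (intro Kdec) auto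
      hence "K w * K (s - w) \<le> q * K (s - w)" using Kpos[of "s-w"] by (intro mult_right_mono)
      moreover have "0 \<le> q * K w" using q0 Kpos[of w] by simp
      ultimately show ?thesis by linarith
    next
      case False
      have "K (s - w) \<le> q" unfolding q_def using False s by (intro Kdec) auto
      hence "K w * K (s - w) \<le> K w * q" using Kpos[of w] by (intro mult_left_mono)
      hence "K w * K (s - w) \<le> q * K w" by (simp add: mult.commute)
      moreover have "0 \<le> q * K (s - w)" using q0 Kpos[of "s-w"] by simp
      ultimately show ?thesis by linarith
    qed
    hence "ennreal (K w * K (s - w)) \<le> ennreal (q * K (s - w) + q * K w)" by (rule ennreal_leI)
    also have "\<dots> = ennreal q * ennreal (K (s - w)) + ennreal q * ennreal (K w)"
      using q0 Kpos by (simp add: ennreal_plus ennreal_mult)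
    finally show "ennreal (indicator {0<..} w * K w * K (s - w)) \<le> ennreal q * ennreal (K (s - w)) + ennreal q * ennreal (K w)"
      by (cases "w > 0") auto
  qed
  also have "\<dots> = ennreal q * M + ennreal q * M"
  proof -
    have "(\<integral>\<^sup>+w. ennreal (K w) \<partial>lborel) = M" by (simp add: M_def)
    thus ?thesis by (subst nn_integral_add) (auto simp: nn_integral_cmult Mshift)
  qed
  also have "\<dots> = ennreal (2 * C * inverse (1 + (s/2) powr (1-\<beta>))) * M"
  proof -
    have "2 * C * inverse (1 + (s/2) powr (1-\<beta>)) = q + q" unfolding q_def by simp
    hence "ennreal (2 * C * inverse (1 + (s/2) powr (1-\<beta>))) = ennreal q + ennreal q"
      by (simp only: ennreal_plus[OF q0 q0, symmetric])
    thus ?thesis by (simp add: distrib_right)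
  qed
  finally show ?thesis .
qed

definition "p x = inverse (1 + (x/2) powr ((1-\<beta>)/2))"

lemma p0: "0 \<le> p x" "p x \<le> 1" unfolding p_def by (auto simp: inverse_le_1_iff)

lemma sep:
  assumes "0 < x" "0 < y"
  shows "inverse (1 + ((x+y)/2) powr (1-\<beta>)) \<le> 3 * (p x * p y)"
proof -
  define s where "s = (x+y)/2"
  define u where "u = s powr ((1-\<beta>)/2)"
  define a where "a = (x/2) powr ((1-\<beta>)/2)"
  define b where "b = (y/2) powr ((1-\<beta>)/2)"
  have s0: "s > 0" unfolding s_def using assms by simp
  have g0: "0 \<le> (1-\<beta>)/2" using b2 a2 by simp
  have au: "a \<le> u" unfolding a_def u_def s_def using assms g0 by (intro powr_mono2) auto
  have bu: "b \<le> u" unfolding b_def u_def s_def using assms g0 by (intro powr_mono2) auto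
  have a0: "0 \<le> a" "0 \<le> b" unfolding a_def b_def by auto
  have uu: "s powr (1-\<beta>) = u * u" unfolding u_def by (simp add: powr_add[symmetric])
  have "(1+a)*(1+b) \<le> (1+u)*(1+u)" using au bu a0 by (intro mult_mono) auto
  also have "\<dots> \<le> 3 * (1 + u*u)"
  proof -
    have h: "0 \<le> (u - 1) * (u - 1)" by simp
    have h2: "0 \<le> u * u" by simp
    have e: "3 * (1 + u*u) - (1+u)*(1+u) = (u - 1) * (u - 1) + u * u + 1" by algebra
    have "0 \<le> 3 * (1 + u*u) - (1+u)*(1+u)" unfolding e using h h2 by simp
    thus ?thesis by simp
  qed
  finally have *: "(1+a)*(1+b) \<le> 3 * (1 + s powr (1-\<beta>))" unfolding uu .
  have "inverse (1 + s powr (1-\<beta>)) \<le> 3 * (inverse (1+a) * inverse (1+b))"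
    using * a0 by (simp add: field_simps add_pos_nonneg)
  thus ?thesis unfolding p_def s_def a_def b_def by simp
qed

end


context L
begin

lemmas pdef = p_def

definition "F x = ennreal (x powr (-\<alpha>) * p x) * indicator {0<..} x"

lemma Fmeas[measurable]: "F \<in> borel_measurable borel"
  unfolding F_def pdef by measurable

lemma pint: "(\<integral>\<^sup>+x. F x \<partial>lborel) < \<infinity>"
  unfolding F_def
proof (rule fin_split[where c=1 and a=\<alpha> and e="-\<alpha>-(1-\<beta>)/2" and A=1 and B="ennreal (2 powr ((1-\<beta>)/2))"])
  show "-\<alpha>-(1-\<beta>)/2 < -1" using ex2 by simp
  fix x :: real
  show "0 < x \<Longrightarrow> x \<le> 1 \<Longrightarrow> ennreal (x powr (-\<alpha>) * p x) \<le> 1 * ennreal (x powr (-\<alpha>))"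
    using p0[of x] by (auto intro!: ennreal_leI mult_left_le)
  assume x: "1 \<le> x"
  have r0: "0 \<le> (1-\<beta>)/2" using a2 b2 by simp
  define r where "r = (1-\<beta>)/2"
  have "p x \<le> (x/2) powr (-r)" unfolding pdef r_def using x r0 by (intro inv_powr_le) auto
  also have "(x/2) powr (-r) = x powr (-r) / 2 powr (-r)" by (rule powr_divide)
  also have "2 powr (-r) = 1 / 2 powr r" by (rule powr_minus_divide)
  also have "x powr (-r) / (1 / 2 powr r) = x powr (-r) * 2 powr r" by simp
  finally have "x powr (-\<alpha>) * p x \<le> x powr (-\<alpha>) * (x powr (-r) * 2 powr r)"
    by (rule mult_left_mono) auto
  also have "\<dots> = 2 powr r * (x powr (-\<alpha>) * x powr (-r))" by (simp only: mult_ac)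
  also have "x powr (-\<alpha>) * x powr (-r) = x powr (-\<alpha> + -r)" by (rule powr_add[symmetric])
  also have "-\<alpha> + -r = -\<alpha>-(1-\<beta>)/2" unfolding r_def by simp
  finally have "ennreal (x powr (-\<alpha>) * p x) \<le> ennreal (2 powr r * x powr (-\<alpha>-(1-\<beta>)/2))"
    by (rule ennreal_leI)
  thus "ennreal (x powr (-\<alpha>) * p x) \<le> ennreal (2 powr ((1-\<beta>)/2)) * ennreal (x powr (-\<alpha>-(1-\<beta>)/2))"
    unfolding r_def ennreal_mult[OF powr_ge_zero powr_ge_zero] .
qed (use a2 in auto)

definition "\<phi>1 x y w = indicator {0<..} x * indicator {0<..} y * indicator {0<..} w * (x powr (-\<alpha>) * y powr (-\<alpha>) * (K w * K (x + y - w)))"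

lemma T1w: "(\<integral>\<^sup>+w. ennreal (\<phi>1 x y w) \<partial>lborel) \<le> ennreal (6*C) * M * (F x * F y)"
proof (cases "x > 0 \<and> y > 0")
  case True
  hence x: "x > 0" and y: "y > 0" by auto
  define c where "c = x powr (-\<alpha>) * y powr (-\<alpha>)"
  have c0: "0 \<le> c" unfolding c_def by simp
  have "(\<integral>\<^sup>+w. ennreal (\<phi>1 x y w) \<partial>lborel) = (\<integral>\<^sup>+w. ennreal c * ennreal (indicator {0<..} w * K w * K (x + y - w)) \<partial>lborel)"
    using x y c0 Kpos by (intro nn_integral_cong) (auto simp: \<phi>1_def c_def ennreal_mult[symmetric] indicator_def)
  also have "\<dots> = ennreal c * (\<integral>\<^sup>+w. ennreal (indicator {0<..} w * K w * K (x + y - w)) \<partial>lborel)"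
    by (rule nn_integral_cmult) measurable
  also have "\<dots> \<le> ennreal c * (ennreal (2 * C * inverse (1 + ((x+y)/2) powr (1-\<beta>))) * M)"
  proof -
    have "(\<integral>\<^sup>+w. ennreal (indicator {0<..} w * K w * K (x + y - w)) \<partial>lborel)
       \<le> ennreal (2 * C * inverse (1 + ((x+y)/2) powr (1-\<beta>))) * M"
      using conv[of "x+y"] x y by simp
    thus ?thesis by (rule mult_left_mono) simp
  qed
  also have "\<dots> \<le> ennreal c * (ennreal (6 * C * (p x * p y)) * M)"
  proof -
    have "2 * C * inverse (1 + ((x+y)/2) powr (1-\<beta>)) \<le> 2 * C * (3 * (p x * p y))"
      using sep[OF x y] by (rule mult_left_mono) (use C0 in auto)
    hence "ennreal (2 * C * inverse (1 + ((x+y)/2) powr (1-\<beta>))) \<le> ennreal (6 * C * (p x * p y))"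
      by (intro ennreal_leI) simp
    thus ?thesis by (rule mult_left_mono[OF mult_right_mono]) auto
  qed
  also have "\<dots> = ennreal (6*C) * M * (F x * F y)"
  proof -
    have "c * (6 * C * (p x * p y)) = (6*C) * ((x powr (-\<alpha>) * p x) * (y powr (-\<alpha>) * p y))"
      unfolding c_def by (simp add: algebra_simps)
    moreover have "0 \<le> 6*C" "0 \<le> x powr (-\<alpha>) * p x" "0 \<le> y powr (-\<alpha>) * p y" "0 \<le> 6 * C * (p x * p y)"
      using C0 p0 by auto
    ultimately have e3: "c * (6 * C * (p x * p y)) = (6*C) * ((x powr (-\<alpha>) * p x) * (y powr (-\<alpha>) * p y))"
      and n: "0 \<le> 6*C" "0 \<le> x powr (-\<alpha>) * p x" "0 \<le> y powr (-\<alpha>) * p y" "0 \<le> 6 * C * (p x * p y)"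
      by auto
    have "ennreal c * (ennreal (6 * C * (p x * p y)) * M) = (ennreal c * ennreal (6 * C * (p x * p y))) * M"
      by (simp only: mult.assoc)
    also have "ennreal c * ennreal (6 * C * (p x * p y)) = ennreal (c * (6 * C * (p x * p y)))"
      using c0 n(4) by (rule ennreal_mult[symmetric])
    also have "\<dots> = ennreal (6*C) * (ennreal (x powr (-\<alpha>) * p x) * ennreal (y powr (-\<alpha>) * p y))"
      unfolding e3 using n by (simp add: ennreal_mult)
    also have "\<dots> * M = ennreal (6*C) * M * (F x * F y)"
      using x y by (simp add: F_def mult_ac)
    finally show ?thesis .
  qed
  finally show ?thesis .
next
  case False
  hence "\<And>w. \<phi>1 x y w = 0" unfolding \<phi>1_def by auto
  hence "(\<integral>\<^sup>+w. ennreal (\<phi>1 x y w) \<partial>lborel) = 0" by (simp del: ennreal_eq_0_iff)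
  thus ?thesis by (simp only: zero_le)
qed

lemma T1fin: "(\<integral>\<^sup>+x. \<integral>\<^sup>+y. \<integral>\<^sup>+w. ennreal (\<phi>1 x y w) \<partial>lborel \<partial>lborel \<partial>lborel) < \<infinity>"
proof -
  define c where "c = ennreal (6*C) * M"
  have "(\<integral>\<^sup>+x. \<integral>\<^sup>+y. \<integral>\<^sup>+w. ennreal (\<phi>1 x y w) \<partial>lborel \<partial>lborel \<partial>lborel)
       \<le> (\<integral>\<^sup>+x. \<integral>\<^sup>+y. (c * F x) * F y \<partial>lborel \<partial>lborel)"
  proof (intro nn_integral_mono)
    fix x y
    show "(\<integral>\<^sup>+w. ennreal (\<phi>1 x y w) \<partial>lborel) \<le> c * F x * F y"
      using T1w[of x y] unfolding c_def by (metis mult.assoc)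
  qed
  also have "\<dots> = (\<integral>\<^sup>+x. c * F x * (\<integral>\<^sup>+y. F y \<partial>lborel) \<partial>lborel)"
  proof (rule nn_integral_cong)
    fix x
    show "(\<integral>\<^sup>+y. c * F x * F y \<partial>lborel) = c * F x * (\<integral>\<^sup>+y. F y \<partial>lborel)"
      by (rule nn_integral_cmult) measurable
  qed
  also have "\<dots> = (\<integral>\<^sup>+x. c * F x \<partial>lborel) * (\<integral>\<^sup>+y. F y \<partial>lborel)"
    by (rule nn_integral_multc) measurable
  also have "\<dots> = c * (\<integral>\<^sup>+x. F x \<partial>lborel) * (\<integral>\<^sup>+y. F y \<partial>lborel)"
  proof -
    have cF: "(\<integral>\<^sup>+x. c * F x \<partial>lborel) = c * (\<integral>\<^sup>+x. F x \<partial>lborel)"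
      by (rule nn_integral_cmult) measurable
    show ?thesis by (simp only: cF)
  qed
  also have "\<dots> < \<infinity>"
    using pint Mfin unfolding c_def by (simp add: ennreal_mult_less_top)
  finally show ?thesis .
qed

end


context L
begin

lemma \<phi>1_meas[measurable (raw)]:
  assumes [measurable]: "f \<in> borel_measurable N" "g' \<in> borel_measurable N" "h \<in> borel_measurable N"
  shows "(\<lambda>t. \<phi>1 (f t) (g' t) (h t)) \<in> borel_measurable N"
  unfolding \<phi>1_def by measurable

definition "\<phi>2 x y w = indicator {0<..} x * indicator {0<..} y * indicator {0<..} w * (x powr (-\<alpha>) * y powr (-\<alpha>) * (K (w - x) * K (w - y)))"
definition "\<phi> x y w = indicator {0<..} x * indicator {0<..} y * indicator {0<..} w * (x powr (-\<alpha>) * y powr (-\<alpha>) * (I1 K x y w + I2 K x y w))"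

lemma \<phi>2_meas[measurable (raw)]:
  assumes [measurable]: "f \<in> borel_measurable N" "g' \<in> borel_measurable N" "h \<in> borel_measurable N"
  shows "(\<lambda>t. \<phi>2 (f t) (g' t) (h t)) \<in> borel_measurable N"
  unfolding \<phi>2_def by measurable

lemma \<phi>_meas[measurable (raw)]:
  assumes [measurable]: "f \<in> borel_measurable N" "g' \<in> borel_measurable N" "h \<in> borel_measurable N"
  shows "(\<lambda>t. \<phi> (f t) (g' t) (h t)) \<in> borel_measurable N"
  unfolding \<phi>_def I1_def I2_def by measurable

lemma \<phi>1_nn: "0 \<le> \<phi>1 x y w" unfolding \<phi>1_def using Kpos by simp
lemma \<phi>2_nn: "0 \<le> \<phi>2 x y w" unfolding \<phi>2_def using Kpos by simp
lemma \<phi>_nn: "0 \<le> \<phi> x y w" unfolding \<phi>_def I1_def I2_def using Kpos by simp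

lemma \<phi>_split: "ennreal (\<phi> x y w) = ennreal (\<phi>1 x y w) + ennreal (\<phi>2 x y w)"
proof -
  have "\<phi> x y w = \<phi>1 x y w + \<phi>2 x y w"
    unfolding \<phi>_def \<phi>1_def \<phi>2_def I1_def I2_def by (simp add: algebra_simps)
  thus ?thesis using \<phi>1_nn \<phi>2_nn by (simp add: ennreal_plus)
qed

lemma T2eq: "(\<integral>\<^sup>+w. \<integral>\<^sup>+y. \<integral>\<^sup>+x. ennreal (\<phi>2 x y w) \<partial>lborel \<partial>lborel \<partial>lborel)
   = (\<integral>\<^sup>+w. g w * g w * indicator {0<..} w \<partial>lborel)"
proof (rule nn_integral_cong)
  fix w :: real
  have "(\<integral>\<^sup>+y. \<integral>\<^sup>+x. ennreal (\<phi>2 x y w) \<partial>lborel \<partial>lborel)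
      = (\<integral>\<^sup>+y. g w * ennreal (indicator {0<..} w * (indicator {0<..} y * y powr (-\<alpha>) * K (w - y))) \<partial>lborel)"
  proof (rule nn_integral_cong)
    fix y :: real
    have "(\<integral>\<^sup>+x. ennreal (\<phi>2 x y w) \<partial>lborel)
        = (\<integral>\<^sup>+x. ennreal (indicator {0<..} x * x powr (-\<alpha>) * K (w - x)) * ennreal (indicator {0<..} w * (indicator {0<..} y * y powr (-\<alpha>) * K (w - y))) \<partial>lborel)"
      using Kpos by (intro nn_integral_cong) (simp add: \<phi>2_def ennreal_mult[symmetric] mult_ac)
    also have "\<dots> = g w * ennreal (indicator {0<..} w * (indicator {0<..} y * y powr (-\<alpha>) * K (w - y)))"
      unfolding g_def by (rule nn_integral_multc) measurable
    finally show "(\<integral>\<^sup>+x. ennreal (\<phi>2 x y w) \<partial>lborel) = g w * ennreal (indicator {0<..} w * (indicator {0<..} y * y powr (-\<alpha>) * K (w - y)))" .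
  qed
  also have "\<dots> = g w * (\<integral>\<^sup>+y. ennreal (indicator {0<..} w * (indicator {0<..} y * y powr (-\<alpha>) * K (w - y))) \<partial>lborel)"
    by (rule nn_integral_cmult) measurable
  also have "(\<integral>\<^sup>+y. ennreal (indicator {0<..} w * (indicator {0<..} y * y powr (-\<alpha>) * K (w - y))) \<partial>lborel)
      = g w * indicator {0<..} w"
    unfolding g_def by (cases "w > 0") auto
  finally show "(\<integral>\<^sup>+y. \<integral>\<^sup>+x. ennreal (\<phi>2 x y w) \<partial>lborel \<partial>lborel) = g w * g w * indicator {0<..} w"
    by (simp add: mult_ac)
qed

lemma Bfin: "(\<integral>\<^sup>+x. \<integral>\<^sup>+y. \<integral>\<^sup>+w. ennreal (\<phi> x y w) \<partial>lborel \<partial>lborel \<partial>lborel) < \<infinity>"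
proof -
  have "(\<integral>\<^sup>+x. \<integral>\<^sup>+y. \<integral>\<^sup>+w. ennreal (\<phi> x y w) \<partial>lborel \<partial>lborel \<partial>lborel)
      = (\<integral>\<^sup>+x. \<integral>\<^sup>+y. \<integral>\<^sup>+w. ennreal (\<phi>1 x y w) \<partial>lborel \<partial>lborel \<partial>lborel)
      + (\<integral>\<^sup>+x. \<integral>\<^sup>+y. \<integral>\<^sup>+w. ennreal (\<phi>2 x y w) \<partial>lborel \<partial>lborel \<partial>lborel)"
    unfolding \<phi>_split
    apply (subst nn_integral_add[symmetric], measurable)
    apply (rule nn_integral_cong)
    apply (subst nn_integral_add[symmetric], measurable)
    apply (rule nn_integral_cong)
    apply (subst nn_integral_add, measurable)
    done
  also have "(\<integral>\<^sup>+x. \<integral>\<^sup>+y. \<integral>\<^sup>+w. ennreal (\<phi>2 x y w) \<partial>lborel \<partial>lborel \<partial>lborel)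
      = (\<integral>\<^sup>+w. \<integral>\<^sup>+y. \<integral>\<^sup>+x. ennreal (\<phi>2 x y w) \<partial>lborel \<partial>lborel \<partial>lborel)"
  proof -
    have "(\<lambda>(x,y,w). ennreal (\<phi>2 x y w)) \<in> borel_measurable (borel \<Otimes>\<^sub>M (borel \<Otimes>\<^sub>M borel))" by measurable
    hence meas: "(\<lambda>(x,y,w). ennreal (\<phi>2 x y w)) \<in> borel_measurable borel" by (simp add: borel_prod)
    from swap3[OF meas] show ?thesis by simp
  qed
  also have "\<dots> = (\<integral>\<^sup>+w. g w * g w * indicator {0<..} w \<partial>lborel)" by (rule T2eq)
  finally show ?thesis using T1fin T2fin by (simp add: ennreal_add_less_top)
qed

end


context L
begin

lemma meas3:
  "(\<lambda>(x,y,w). ennreal (\<phi> x y w)) \<in> borel_measurable borel"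
proof -
  have "(\<lambda>(x,y,w). ennreal (\<phi> x y w)) \<in> borel_measurable (borel \<Otimes>\<^sub>M (borel \<Otimes>\<^sub>M borel))" by measurable
  thus ?thesis by (simp add: borel_prod)
qed

lemma AA: "A_alpha \<alpha> K = (\<integral>\<^sup>+w. \<integral>\<^sup>+y. \<integral>\<^sup>+x. ennreal (\<phi> x y w) \<partial>lborel \<partial>lborel \<partial>lborel)"
  unfolding A_alpha_def
proof (rule nn_integral_cong)
  fix w :: real
  show "(\<integral>\<^sup>+ y. (\<integral>\<^sup>+ x. ennreal (x powr - \<alpha> * y powr - \<alpha> * (I1 K x y w + I2 K x y w)) * indicator {0<..} x \<partial>lborel) * indicator {0<..} y \<partial>lborel) * indicator {0<..} w
     = (\<integral>\<^sup>+y. \<integral>\<^sup>+x. ennreal (\<phi> x y w) \<partial>lborel \<partial>lborel)"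
  proof (cases "w > 0")
    case False
    thus ?thesis by (simp add: \<phi>_def)
  next
    case w: True
    have "(\<integral>\<^sup>+ y. (\<integral>\<^sup>+ x. ennreal (x powr - \<alpha> * y powr - \<alpha> * (I1 K x y w + I2 K x y w)) * indicator {0<..} x \<partial>lborel) * indicator {0<..} y \<partial>lborel)
       = (\<integral>\<^sup>+y. \<integral>\<^sup>+x. ennreal (\<phi> x y w) \<partial>lborel \<partial>lborel)"
    proof (rule nn_integral_cong)
      fix y :: real
      show "(\<integral>\<^sup>+ x. ennreal (x powr - \<alpha> * y powr - \<alpha> * (I1 K x y w + I2 K x y w)) * indicator {0<..} x \<partial>lborel) * indicator {0<..} y
         = (\<integral>\<^sup>+x. ennreal (\<phi> x y w) \<partial>lborel)"
      proof (cases "y > 0")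
        case False
        thus ?thesis by (simp add: \<phi>_def)
      next
        case True
        thus ?thesis using w by (simp, intro nn_integral_cong) (auto simp: \<phi>_def indicator_def)
      qed
    qed
    thus ?thesis using w by simp
  qed
qed

lemma Afin: "A_alpha \<alpha> K < \<infinity>"
proof -
  have "A_alpha \<alpha> K = (\<integral>\<^sup>+x. \<integral>\<^sup>+y. \<integral>\<^sup>+w. ennreal (\<phi> x y w) \<partial>lborel \<partial>lborel \<partial>lborel)"
    unfolding AA using swap3[OF meas3] by simp
  thus ?thesis using Bfin by simp
qed

lemma D0fin: "Delta0 \<alpha> K < \<infinity>"
  unfolding Delta0_def
proof (rule fin_split[where c=1 and a=\<alpha> and e="-\<alpha>-(1-\<beta>)" and A="ennreal C" and B="ennreal C"])
  show "-\<alpha>-(1-\<beta>) < -1" using b2 a1 by simp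
  fix x :: real
  show "0 < x \<Longrightarrow> x \<le> 1 \<Longrightarrow> ennreal (x powr (-\<alpha>) * K x) \<le> ennreal C * ennreal (x powr (-\<alpha>))"
  proof -
    have "x powr (-\<alpha>) * K x \<le> x powr (-\<alpha>) * C" using Kle by (rule mult_left_mono) simp
    thus ?thesis using C0 by (simp add: ennreal_mult[symmetric] mult.commute ennreal_leI)
  qed
  assume x: "1 \<le> x"
  have "K x \<le> C * inverse (1 + x powr (1 - \<beta>))" using x by (intro Kdec) auto
  also have "\<dots> \<le> C * x powr (\<beta> - 1)" using qle[of x] x C0 by (intro mult_left_mono) auto
  finally have "x powr (-\<alpha>) * K x \<le> x powr (-\<alpha>) * (C * x powr (\<beta> - 1))" by (rule mult_left_mono) simp
  also have "\<dots> = C * (x powr (-\<alpha>) * x powr (\<beta> - 1))" by (simp only: mult_ac)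
  also have "x powr (-\<alpha>) * x powr (\<beta> - 1) = x powr (-\<alpha> + (\<beta> - 1))" by (rule powr_add[symmetric])
  also have "-\<alpha> + (\<beta> - 1) = -\<alpha>-(1-\<beta>)" by simp
  finally have "ennreal (x powr (-\<alpha>) * K x) \<le> ennreal (C * x powr (-\<alpha>-(1-\<beta>)))" by (rule ennreal_leI)
  thus "ennreal (x powr (-\<alpha>) * K x) \<le> ennreal C * ennreal (x powr (-\<alpha>-(1-\<beta>)))"
    using C0 by (simp add: ennreal_mult)
qed (use a2 in auto)

end


context L
begin

definition "D h x y w = (if 0 \<le> x \<and> x \<le> 1/h \<and> 0 \<le> y \<and> y \<le> 1/h \<and> x \<le> w \<and> w \<le> 1/h
   then x powr (-\<alpha>) * y powr (-\<alpha>) * max w y * (I1 K x y w + I2 K x y w) else 0)"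

lemma Dmeas: "(\<lambda>(x,y,w). ennreal (D h x y w)) \<in> borel_measurable borel"
proof -
  have "(\<lambda>(x,y,w). ennreal (D h x y w)) \<in> borel_measurable (borel \<Otimes>\<^sub>M (borel \<Otimes>\<^sub>M borel))"
    unfolding D_def I1_def I2_def by measurable
  thus ?thesis by (simp add: borel_prod)
qed

lemma DD: "Delta1 \<alpha> K h = (\<integral>\<^sup>+x. \<integral>\<^sup>+y. \<integral>\<^sup>+w. ennreal (D h x y w) \<partial>lborel \<partial>lborel \<partial>lborel)"
  unfolding Delta1_def
proof (rule nn_integral_cong)
  fix x :: real
  show "(\<integral>\<^sup>+ y. (\<integral>\<^sup>+ w. ennreal (x powr - \<alpha> * y powr - \<alpha> * max w y * (I1 K x y w + I2 K x y w)) * indicator {x..1/h} w \<partial>lborel) * indicator {0..1/h} y \<partial>lborel) * indicator {0..1/h} x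
     = (\<integral>\<^sup>+y. \<integral>\<^sup>+w. ennreal (D h x y w) \<partial>lborel \<partial>lborel)"
  proof (cases "x \<in> {0..1/h}")
    case False
    hence "\<And>y w. D h x y w = 0" unfolding D_def by (intro if_not_P) auto
    thus ?thesis using False by simp
  next
    case xin: True
    have "(\<integral>\<^sup>+ y. (\<integral>\<^sup>+ w. ennreal (x powr - \<alpha> * y powr - \<alpha> * max w y * (I1 K x y w + I2 K x y w)) * indicator {x..1/h} w \<partial>lborel) * indicator {0..1/h} y \<partial>lborel)
       = (\<integral>\<^sup>+y. \<integral>\<^sup>+w. ennreal (D h x y w) \<partial>lborel \<partial>lborel)"
    proof (rule nn_integral_cong)
      fix y :: real
      show "(\<integral>\<^sup>+ w. ennreal (x powr - \<alpha> * y powr - \<alpha> * max w y * (I1 K x y w + I2 K x y w)) * indicator {x..1/h} w \<partial>lborel) * indicator {0..1/h} y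
         = (\<integral>\<^sup>+w. ennreal (D h x y w) \<partial>lborel)"
      proof (cases "y \<in> {0..1/h}")
        case False
        hence "\<And>w. D h x y w = 0" unfolding D_def by (intro if_not_P) auto
        thus ?thesis using False by simp
      next
        case True
        thus ?thesis using xin by (simp, intro nn_integral_cong) (auto simp: D_def indicator_def)
      qed
    qed
    thus ?thesis using xin by simp
  qed
qed

lemma \<phi>_pos: "\<phi> x y w \<noteq> 0 \<Longrightarrow> 0 < x \<and> 0 < y \<and> 0 < w"
  unfolding \<phi>_def by (auto simp: indicator_def split: if_splits)

definition "G t z = ennreal (min 1 (max (snd (snd z)) (fst (snd z)) * t) * \<phi> (fst z) (fst (snd z)) (snd (snd z)))"

lemma Gmeas[measurable]: "G t \<in> borel_measurable borel"
proof -
  have "G t \<in> borel_measurable (borel \<Otimes>\<^sub>M (borel \<Otimes>\<^sub>M borel))"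
    unfolding G_def by measurable
  thus ?thesis by (simp add: borel_prod)
qed

lemma Gmono: assumes "t \<le> s" shows "G t z \<le> G s z"
proof (cases "\<phi> (fst z) (fst (snd z)) (snd (snd z)) = 0")
  case True thus ?thesis by (simp add: G_def)
next
  case False
  hence m: "0 < max (snd (snd z)) (fst (snd z))" using \<phi>_pos[OF False] by (simp add: less_max_iff_disj)
  have "min 1 (max (snd (snd z)) (fst (snd z)) * t) \<le> min 1 (max (snd (snd z)) (fst (snd z)) * s)"
    using m assms by (intro min.mono) (auto intro: mult_left_mono)
  hence "min 1 (max (snd (snd z)) (fst (snd z)) * t) * \<phi> (fst z) (fst (snd z)) (snd (snd z))
      \<le> min 1 (max (snd (snd z)) (fst (snd z)) * s) * \<phi> (fst z) (fst (snd z)) (snd (snd z))"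
    using \<phi>_nn by (rule mult_right_mono)
  thus ?thesis unfolding G_def by (rule ennreal_leI)
qed

lemma Gle: "G t z \<le> ennreal (\<phi> (fst z) (fst (snd z)) (snd (snd z)))"
proof -
  have "min 1 (max (snd (snd z)) (fst (snd z)) * t) * \<phi> (fst z) (fst (snd z)) (snd (snd z))
      \<le> 1 * \<phi> (fst z) (fst (snd z)) (snd (snd z))"
    by (rule mult_right_mono) (simp_all add: \<phi>_nn)
  thus ?thesis unfolding G_def by (intro ennreal_leI) simp
qed

lemma B'fin: "(\<integral>\<^sup>+z. ennreal (\<phi> (fst z) (fst (snd z)) (snd (snd z))) \<partial>lborel) < \<infinity>"
  using nest3[OF meas3] Bfin by (simp add: split_beta')

lemma INF_G: "(INF n. (\<integral>\<^sup>+z. G (inverse (real (Suc n))) z \<partial>lborel)) = 0"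
proof -
  have dec: "decseq (\<lambda>n. G (inverse (real (Suc n))))"
    by (rule decseq_SucI) (auto simp: le_fun_def intro!: Gmono simp del: of_nat_Suc)
  have fin: "(\<integral>\<^sup>+z. G (inverse (real (Suc n))) z \<partial>lborel) < \<infinity>" for n
  proof -
    have "(\<integral>\<^sup>+z. G (inverse (real (Suc n))) z \<partial>lborel) \<le> (\<integral>\<^sup>+z. ennreal (\<phi> (fst z) (fst (snd z)) (snd (snd z))) \<partial>lborel)"
      by (rule nn_integral_mono) (rule Gle)
    thus ?thesis using B'fin by (rule le_less_trans)
  qed
  have "(\<integral>\<^sup>+z. (INF n. G (inverse (real (Suc n))) z) \<partial>lborel) = (INF n. (\<integral>\<^sup>+z. G (inverse (real (Suc n))) z \<partial>lborel))"
    apply (rule nn_integral_monotone_convergence_INF_decseq[OF dec])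
     apply simp
    apply (rule fin)
    done
  moreover have "(INF n. G (inverse (real (Suc n))) z) = 0" for z
  proof -
    have d: "decseq (\<lambda>n. G (inverse (real (Suc n))) z)"
    proof (rule decseq_SucI)
      fix n
      have "inverse (real (Suc (Suc n))) \<le> inverse (real (Suc n))"
        by (rule le_imp_inverse_le) auto
      thus "G (inverse (real (Suc (Suc n)))) z \<le> G (inverse (real (Suc n))) z" by (rule Gmono)
    qed
    have "(\<lambda>n. G (inverse (real (Suc n))) z) \<longlonglongrightarrow> ennreal (min 1 (max (snd (snd z)) (fst (snd z)) * 0) * \<phi> (fst z) (fst (snd z)) (snd (snd z)))"
    proof -
      have "(\<lambda>n. max (snd (snd z)) (fst (snd z)) * inverse (real (Suc n))) \<longlonglongrightarrow> max (snd (snd z)) (fst (snd z)) * 0"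
        by (rule tendsto_mult[OF tendsto_const LIMSEQ_inverse_real_of_nat])
      hence "(\<lambda>n. min 1 (max (snd (snd z)) (fst (snd z)) * inverse (real (Suc n)))) \<longlonglongrightarrow> min 1 (max (snd (snd z)) (fst (snd z)) * 0)"
        by (rule tendsto_min[OF tendsto_const])
      hence "(\<lambda>n. min 1 (max (snd (snd z)) (fst (snd z)) * inverse (real (Suc n))) * \<phi> (fst z) (fst (snd z)) (snd (snd z)))
          \<longlonglongrightarrow> min 1 (max (snd (snd z)) (fst (snd z)) * 0) * \<phi> (fst z) (fst (snd z)) (snd (snd z))"
        by (rule tendsto_mult[OF _ tendsto_const])
      thus ?thesis unfolding G_def by (rule tendsto_ennrealI)
    qed
    hence "(\<lambda>n. G (inverse (real (Suc n))) z) \<longlonglongrightarrow> 0" by simp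
    with LIMSEQ_INF[OF d] show ?thesis by (rule LIMSEQ_unique)
  qed
  ultimately show ?thesis by simp
qed

lemma ptw:
  assumes h: "0 < h" "h \<le> t"
  shows "ennreal h * ennreal (D h x y w) \<le> G t (x,y,w)"
proof (cases "0 \<le> x \<and> x \<le> 1/h \<and> 0 \<le> y \<and> y \<le> 1/h \<and> x \<le> w \<and> w \<le> 1/h")
  case False
  hence "D h x y w = 0" unfolding D_def by (rule if_not_P)
  thus ?thesis by simp
next
  case True
  show ?thesis
  proof (cases "x = 0 \<or> y = 0")
    case True
    thus ?thesis by (auto simp: D_def)
  next
    case False
    with True have x: "0 < x" and y: "0 < y" and w: "0 < w" and wh: "w \<le> 1/h" and yh: "y \<le> 1/h" by auto
    define P where "P = x powr (-\<alpha>) * y powr (-\<alpha>) * (I1 K x y w + I2 K x y w)"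
    define m where "m = max w y"
    have P0: "0 \<le> P" unfolding P_def I1_def I2_def using Kpos by simp
    have \<phi>P: "\<phi> x y w = P" unfolding \<phi>_def P_def using x y w by simp
    have DP: "D h x y w = P * m" unfolding D_def P_def m_def using True by (simp add: algebra_simps)
    have m0: "0 < m" unfolding m_def using w by simp
    have "m \<le> 1/h" unfolding m_def using wh yh by simp
    hence hm1: "h * m \<le> 1" using h by (simp add: field_simps)
    have hmt: "h * m \<le> m * t" using h m0 by (simp add: mult.commute mult_left_mono)
    have "h * (P * m) \<le> min 1 (m * t) * P"
    proof -
      have "h * m \<le> min 1 (m * t)" using hm1 hmt by simp
      hence "(h * m) * P \<le> min 1 (m * t) * P" using P0 by (rule mult_right_mono)
      thus ?thesis by (simp add: mult_ac)
    qed
    hence "ennreal (h * (P * m)) \<le> ennreal (min 1 (m * t) * P)" by (rule ennreal_leI)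
    moreover have "ennreal h * ennreal (P * m) = ennreal (h * (P * m))"
      using h P0 m0 by (simp add: ennreal_mult)
    moreover have "G t (x,y,w) = ennreal (min 1 (m * t) * P)" unfolding G_def \<phi>P[symmetric] m_def by simp
    ultimately show ?thesis unfolding DP by simp
  qed
qed

lemma D1lim: "((\<lambda>h. ennreal h * Delta1 \<alpha> K h) \<longlongrightarrow> 0) (at_right 0)"
proof (rule order_tendstoI)
  fix a :: ennreal assume "a < 0" thus "eventually (\<lambda>h. a < ennreal h * Delta1 \<alpha> K h) (at_right 0)" by simp
next
  fix a :: ennreal assume a: "0 < a"
  then obtain n where n: "(\<integral>\<^sup>+z. G (inverse (real (Suc n))) z \<partial>lborel) < a"
  proof -
    have "(INF n. (\<integral>\<^sup>+z. G (inverse (real (Suc n))) z \<partial>lborel)) < a" using INF_G a by simp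
    thus ?thesis using that by (auto simp: INF_less_iff)
  qed
  have "eventually (\<lambda>h. h \<in> {0<..<inverse (real (Suc n))}) (at_right (0::real))"
    by (rule eventually_at_right_real) simp
  thus "eventually (\<lambda>h. ennreal h * Delta1 \<alpha> K h < a) (at_right 0)"
  proof (rule eventually_mono)
    fix h :: real assume "h \<in> {0<..<inverse (real (Suc n))}"
    hence h: "0 < h" "h \<le> inverse (real (Suc n))" by auto
    have "ennreal h * Delta1 \<alpha> K h = ennreal h * (\<integral>\<^sup>+z. ennreal (D h (fst z) (fst (snd z)) (snd (snd z))) \<partial>lborel)"
      unfolding DD using nest3[OF Dmeas[of h]] by (simp add: split_beta')
    also have "\<dots> = (\<integral>\<^sup>+z. ennreal h * ennreal (D h (fst z) (fst (snd z)) (snd (snd z))) \<partial>lborel)"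
    proof -
      have "(\<lambda>z. ennreal (D h (fst z) (fst (snd z)) (snd (snd z)))) \<in> borel_measurable lborel"
        using Dmeas[of h] by (simp add: split_beta')
      thus ?thesis by (rule nn_integral_cmult[symmetric])
    qed
    also have "\<dots> \<le> (\<integral>\<^sup>+z. G (inverse (real (Suc n))) z \<partial>lborel)"
    proof (rule nn_integral_mono)
      fix z :: "real \<times> real \<times> real"
      show "ennreal h * ennreal (D h (fst z) (fst (snd z)) (snd (snd z))) \<le> G (inverse (real (Suc n))) z"
        using ptw[OF h, of "fst z" "fst (snd z)" "snd (snd z)"] by simp
    qed
    also have "\<dots> < a" by (rule n)
    finally show "ennreal h * Delta1 \<alpha> K h < a" .
  qed
qed

end

theorem lemmaA6:
  fixes \<alpha> \<beta> :: real and K :: "real \<Rightarrow> real"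
  assumes "1/2 < \<alpha>" "\<alpha> < 1" "0 < \<beta>" "\<beta> \<le> \<alpha> - 1/2"
    and "\<And>x. K x \<ge> 0"
    and "\<And>x. K (-x) = K x"
    and "integrable lborel K"
    and "\<exists>C. \<forall>x. \<bar>K x\<bar> \<le> C * inverse (1 + \<bar>x\<bar> powr (1 - \<beta>))"
  shows "Delta0 \<alpha> K < \<infinity> \<and> A_alpha \<alpha> K < \<infinity> \<and>
         ((\<lambda>h. ennreal h * Delta1 \<alpha> K h) \<longlongrightarrow> 0) (at_right 0)"
  proof -
  obtain C where Cb: "\<forall>x. \<bar>K x\<bar> \<le> C * inverse (1 + \<bar>x\<bar> powr (1 - \<beta>))"
    using assms(8) by blast
  interpret L \<alpha> \<beta> K C
    using assms(1-7) Cb by unfold_locales auto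
  show ?thesis using D0fin Afin D1lim by simp
qed

end
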